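(* Let $m\geq1$ and $c$ be integers with $0<c<m$ and $2c\neq m$. Then for all integers $n\geq0$, $$p^c_m(n)+\sum_{j\geq1}(-1)^j\left(p^c_m\!\left(n-\tfrac{mj^2+(m-2c)j}{2}\right)+p^c_m\!\left(n-\tfrac{mj^2-(m-2c)j}{2}\right)\right)=\begin{cases}1,&\text{if } n=m\,\frac{j(3j-1)}{2}\text{ for some even } j\in\mathbb{Z},\\-1,&\text{if } n=m\,\frac{j(3j-1)}{2}\text{ for some odd } j\in\mathbb{Z},\\0,&\text{otherwise,}\end{cases}$$ i.e. $p^c_m(n)-p^c_m(n-(m-c))-p^c_m(n-c)+p^c_m(n-(3m-2c))+p^c_m(n-(m+2c))-\cdots$ equals the right-hand side above.
   Context: $p^c_m(n)$ denotes the number of partitions of $n$ all of whose parts are congruent to $c$ or $-c$ modulo $m$, with $p^c_m(0)=1$ and $p^c_m(k)=0$ for $k<0$; its generating function is $\prod_{k\ge1}\frac{1}{(1-q^{mk-c})(1-q^{mk-(m-c)})}$. The numbers $j(3j-1)/2$, $j\in\mathbb{Z}$, are the (generalized) pentagonal numbers, which are distinct for distinct $j$. *)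

theory Defs
  imports Main "HOL-Library.Multiset"
begin

definition partitions_pm :: "int \<Rightarrow> int \<Rightarrow> nat \<Rightarrow> nat multiset set" where
  "partitions_pm m c n = {P. sum_mset P = n \<and>
      (\<forall>x \<in># P. 0 < x \<and> (int x mod m = c mod m \<or> int x mod m = (- c) mod m))}"

definition pcm :: "int \<Rightarrow> int \<Rightarrow> int \<Rightarrow> int" where
  "pcm m c k = (if k < 0 then 0 else int (card (partitions_pm m c (nat k))))"

end

theory Submission
  imports Defs "HOL-Computational_Algebra.Formal_Power_Series"
begin


fun qb :: "'a::comm_ring_1 \<Rightarrow> nat \<Rightarrow> nat \<Rightarrow> 'a" where
  "qb x 0 k = (if k = 0 then 1 else 0)"
| "qb x (Suc N) k = (if k = 0 then 1 else qb x N k + x^(Suc N - k) * qb x N (k - 1))"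

lemma qb_0[simp]: "qb x N 0 = 1"
  by (cases N) auto

lemma qb_zero: "N < k \<Longrightarrow> qb x N k = 0"
  by (induction N arbitrary: k) auto

definition tri :: "nat \<Rightarrow> nat" where "tri k = k * (k - 1) div 2"

lemma tri_Suc: "tri (Suc k) = tri k + k"
proof -
  have "even (k * (k - 1))" by (cases k) auto
  then show ?thesis unfolding tri_def by (cases k) (auto elim!: evenE simp: algebra_simps)
qed

definition AA :: "'a::comm_ring_1 \<Rightarrow> nat \<Rightarrow> 'a" where
  "AA x n = (\<Prod>i=1..n. 1 - x^i)"

lemma AA_Suc: "AA x (Suc n) = AA x n * (1 - x^Suc n)"
  unfolding AA_def by (simp add: prod.nat_ivl_Suc')

lemma qb_prod: "k \<le> N \<Longrightarrow> qb x N k * AA x k * AA x (N - k) = AA x N"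
proof (induction N arbitrary: k)
  case 0
  then show ?case by (simp add: AA_def)
next
  case (Suc N)
  show ?case
  proof (cases k)
    case 0
    then show ?thesis by (simp add: AA_def)
  next
    case (Suc k')
    have h2: "qb x N k' * AA x k' * AA x (N - k') = AA x N" using Suc.IH[of k'] Suc.prems Suc by simp
    have t2: "x^(Suc N - k) * qb x N (k - 1) * AA x k * AA x (Suc N - k) = x^(Suc N - k) * AA x N * (1 - x^k)"
    proof -
      have "AA x k = AA x k' * (1 - x^k)" using Suc AA_Suc by simp
      moreover have "Suc N - k = N - k'" "k - 1 = k'" using Suc by auto
      ultimately have "x^(Suc N - k) * qb x N (k - 1) * AA x k * AA x (Suc N - k)
          = x^(Suc N - k) * (qb x N k' * AA x k' * AA x (N - k')) * (1 - x^k)"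
        by (simp add: ac_simps)
      then show ?thesis using h2 by simp
    qed
    have t1: "qb x N k * AA x k * AA x (Suc N - k) = AA x N * (1 - x^(Suc N - k))"
    proof (cases "k \<le> N")
      case True
      have "Suc N - k = Suc (N - k)" using True by simp
      then have "qb x N k * AA x k * AA x (Suc N - k) = (qb x N k * AA x k * AA x (N - k)) * (1 - x^(Suc N - k))"
        by (simp add: AA_Suc ac_simps)
      then show ?thesis using Suc.IH[OF True] by simp
    next
      case False
      then have "k = Suc N" using Suc.prems by simp
      then show ?thesis by (simp add: qb_zero)
    qed
    have "qb x (Suc N) k * AA x k * AA x (Suc N - k)
        = qb x N k * AA x k * AA x (Suc N - k) + x^(Suc N - k) * qb x N (k - 1) * AA x k * AA x (Suc N - k)"
      using Suc by (simp add: algebra_simps)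
    also have "\<dots> = AA x N * (1 - x^(Suc N - k)) + x^(Suc N - k) * AA x N * (1 - x^k)"
      using t1 t2 by simp
    also have "\<dots> = AA x N * (1 - x^(Suc N - k) * x^k)" by (simp add: algebra_simps)
    also have "x^(Suc N - k) * x^k = x^Suc N" using Suc.prems by (simp add: power_add[symmetric])
    finally show ?thesis by (simp add: AA_Suc)
  qed
qed

lemma qbinom_thm:
  "(\<Prod>i<N. w + y * x^i) = (\<Sum>k\<le>N. x^tri k * qb x N k * y^k * w^(N-k))"
proof (induction N)
  case 0
  then show ?case by (simp add: tri_def)
next
  case (Suc N)
  have "(\<Prod>i<Suc N. w + y * x^i) = (\<Sum>k\<le>N. x^tri k * qb x N k * y^k * w^(N-k)) * (w + y * x^N)"
    using Suc by simp
  also have "\<dots> = (\<Sum>k\<le>N. x^tri k * qb x N k * y^k * w^(Suc N-k))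
      + (\<Sum>k\<le>N. x^(tri k + N) * qb x N k * y^(Suc k) * w^(N-k))"
    unfolding distrib_left sum_distrib_right
    by (intro arg_cong2[where f="(+)"] sum.cong) (auto simp: power_add Suc_diff_le algebra_simps)
  also have "(\<Sum>k\<le>N. x^tri k * qb x N k * y^k * w^(Suc N-k))
      = (\<Sum>k\<le>Suc N. x^tri k * qb x N k * y^k * w^(Suc N-k))"
    by (simp add: qb_zero)
  also have "(\<Sum>k\<le>N. x^(tri k + N) * qb x N k * y^(Suc k) * w^(N-k))
      = (\<Sum>k\<le>Suc N. if k = 0 then 0 else x^tri k * x^(Suc N - k) * qb x N (k-1) * y^k * w^(Suc N-k))"
    apply (subst sum.atMost_Suc_shift)
    apply (simp add: tri_Suc power_add)
    apply (rule sum.cong, simp)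
    apply (simp add: mult.assoc flip: power_add)
    done
  also have "(\<Sum>k\<le>Suc N. x^tri k * qb x N k * y^k * w^(Suc N-k))
      + (\<Sum>k\<le>Suc N. if k = 0 then 0 else x^tri k * x^(Suc N - k) * qb x N (k-1) * y^k * w^(Suc N-k))
      = (\<Sum>k\<le>Suc N. x^tri k * qb x (Suc N) k * y^k * w^(Suc N-k))"
    by (subst sum.distrib[symmetric], rule sum.cong) (auto simp: power_add algebra_simps)
  finally show ?case .
qed



definition eqN :: "nat \<Rightarrow> int fps \<Rightarrow> int fps \<Rightarrow> bool" where
  "eqN N f g \<longleftrightarrow> (\<forall>i\<le>N. fps_nth f i = fps_nth g i)"

lemma eqN_refl[simp]: "eqN N f f" by (simp add: eqN_def)
lemma eqN_sym: "eqN N f g \<Longrightarrow> eqN N g f" by (simp add: eqN_def)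
lemma eqN_trans: "eqN N f g \<Longrightarrow> eqN N g h \<Longrightarrow> eqN N f h" by (simp add: eqN_def)
lemma eqN_add: "eqN N f g \<Longrightarrow> eqN N f' g' \<Longrightarrow> eqN N (f + f') (g + g')" by (simp add: eqN_def)
lemma eqN_mult: "eqN N f g \<Longrightarrow> eqN N f' g' \<Longrightarrow> eqN N (f * f') (g * g')"
  unfolding eqN_def fps_mult_nth by (auto intro!: sum.cong)
lemma eqN_sum: "(\<And>k. k \<in> A \<Longrightarrow> eqN N (f k) (g k)) \<Longrightarrow> eqN N (sum f A) (sum g A)"
  unfolding eqN_def fps_sum_nth by (auto intro!: sum.cong)

lemma eqN_Xpow_zero: "N < e \<Longrightarrow> eqN N (fps_X^e * h) 0"
  unfolding eqN_def by (simp add: fps_X_power_mult_nth)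

lemma eqN_one_minus: "N < e \<Longrightarrow> eqN N (1 - fps_X^e) 1"
  unfolding eqN_def by auto

lemma eqN_cancel:
  assumes "fps_nth f 0 = 1" "eqN N (f * g) (f * h)" shows "eqN N g h"
proof -
  have "\<forall>i\<le>n. fps_nth g i = fps_nth h i" if "n \<le> N" for n
    using that
  proof (induction n)
    case 0
    then show ?case using assms unfolding eqN_def by (metis fps_mult_nth_0 le0 le_zero_eq mult_1)
  next
    case (Suc n)
    have IH: "\<forall>i\<le>n. fps_nth g i = fps_nth h i" using Suc by simp
    have "fps_nth (f * (g - h)) (Suc n) = 0" using assms(2) Suc.prems unfolding eqN_def by (simp add: algebra_simps)
    moreover have "fps_nth (f * (g - h)) (Suc n) = (\<Sum>i=0..Suc n. fps_nth f i * fps_nth (g - h) (Suc n - i))"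
      by (rule fps_mult_nth)
    moreover have "(\<Sum>i=0..Suc n. fps_nth f i * fps_nth (g - h) (Suc n - i)) = fps_nth f 0 * fps_nth (g-h) (Suc n) + (\<Sum>i=Suc 0..Suc n. fps_nth f i * fps_nth (g - h) (Suc n - i))"
      by (simp add: sum.atLeast_Suc_atMost)
    moreover have "(\<Sum>i=Suc 0..Suc n. fps_nth f i * fps_nth (g - h) (Suc n - i)) = 0"
      using IH by (intro sum.neutral) auto
    ultimately have "fps_nth (g - h) (Suc n) = 0" using assms(1) by simp
    then show ?case using IH le_Suc_eq by auto
  qed
  then show ?thesis unfolding eqN_def by blast
qed

abbreviation XX :: "int fps" where "XX \<equiv> fps_X"

lemma AA_trunc:
  assumes "m \<ge> 1" "N \<le> a" shows "eqN N (AA (XX^m) a) (AA (XX^m) N)"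
  using assms(2)
proof (induction a rule: dec_induct)
  case base then show ?case by simp
next
  case (step a)
  have "N < m * Suc a" using assms step by (metis le_imp_less_Suc less_le_trans mult_1 mult_le_mono1)
  then have "eqN N (1 - XX^(m * Suc a)) 1" by (rule eqN_one_minus)
  then have "eqN N (AA (XX^m) a * (1 - (XX^m)^Suc a)) (AA (XX^m) N * 1)"
    using step by (intro eqN_mult) (auto simp: power_mult[symmetric] power_add[symmetric])
  then show ?case by (simp add: AA_Suc)
qed

lemma AA_nth0: "fps_nth (AA (XX^m) a) 0 = 1" if "m \<ge> 1"
  unfolding AA_def using that
  by (induction a) (auto simp: prod.nat_ivl_Suc' power_mult[symmetric])



definition ee :: "nat \<Rightarrow> nat \<Rightarrow> int \<Rightarrow> nat" where
  "ee m c j = nat ((int m * j^2 + (int m - 2 * int c) * j) div 2)"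

lemma ee_aux:
  fixes m c :: nat and j :: int
  assumes "0 < c" "c < m"
  shows "2 * \<bar>j\<bar> \<le> int m * j^2 + (int m - 2 * int c) * j"
    and "even (int m * j^2 + (int m - 2 * int c) * j)"
proof -
  show "even (int m * j^2 + (int m - 2 * int c) * j)"
  proof -
    have "int m * j^2 + (int m - 2 * int c) * j = int m * (j * (j + 1)) - 2 * (int c * j)"
      by (simp add: algebra_simps power2_eq_square)
    moreover have "even (j * (j + 1))" by simp
    ultimately show ?thesis by simp
  qed
  show "2 * \<bar>j\<bar> \<le> int m * j^2 + (int m - 2 * int c) * j"
  proof (cases "j \<ge> 0")
    case True
    have "int m * j^2 + (int m - 2 * int c) * j = j * (int m * j + int m - 2 * int c)"
      by (simp add: algebra_simps power2_eq_square)
    moreover have "j * 2 \<le> j * (int m * j + int m - 2 * int c)"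
    proof (cases "j = 0")
      case False
      then have "j \<ge> 1" using True by simp
      then have "int m * j \<ge> int m" using mult_left_mono[of 1 j "int m"] by simp
      then have "int m * j + int m - 2 * int c \<ge> 2" using assms by linarith
      then show ?thesis using True by (intro mult_left_mono) auto
    qed simp
    ultimately show ?thesis using True by (simp add: mult.commute)
  next
    case False
    define t where "t = - j"
    have t: "t \<ge> 1" using False t_def by simp
    have "int m * j^2 + (int m - 2 * int c) * j = t * (int m * t - int m + 2 * int c)"
      by (simp add: t_def algebra_simps power2_eq_square)
    moreover have "t * 2 \<le> t * (int m * t - int m + 2 * int c)"
    proof -
      have "int m * t \<ge> int m" using t mult_left_mono[of 1 t "int m"] by simp
      then have "int m * t - int m + 2 * int c \<ge> 2" using assms by linarith
      then show ?thesis using t by (intro mult_left_mono) auto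
    qed
    ultimately show ?thesis using t t_def by (simp add: mult.commute)
  qed
qed

lemma ee_twice:
  assumes "0 < c" "c < m"
  shows "2 * int (ee m c j) = int m * j^2 + (int m - 2 * int c) * j"
  using ee_aux[OF assms, of j] unfolding ee_def by auto

lemma ee_ge:
  assumes "0 < c" "c < m"
  shows "\<bar>j\<bar> \<le> int (ee m c j)"
  using ee_aux(1)[OF assms, of j] ee_twice[OF assms, of j] by linarith

lemma ee_0[simp]: "ee m c 0 = 0" by (simp add: ee_def)

lemma sum_tri: "(\<Sum>i<n. i) = tri n"
proof (induction n)
  case 0 show ?case by (simp add: tri_def)
next
  case (Suc n) then show ?case by (simp add: tri_Suc)
qed

lemma tri_int: "2 * int (tri k) = int k * (int k - 1)"
proof -
  have "even (k * (k - 1))" by (cases k) auto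
  then have "2 * tri k = k * (k - 1)" unfolding tri_def by simp
  then have "2 * int (tri k) = int (k * (k - 1))" by linarith
  then show ?thesis by (cases k) (auto simp: algebra_simps)
qed

lemma exp_identity:
  assumes "0 < c" "c < m" "k \<le> 2 * n" "c \<le> m * n"
  shows "m * tri k + (m * n - c) * (2 * n - k) = (m * tri n + (m * n - c) * n) + ee m c (int n - int k)"
proof -
  have h1: "int (m * n - c) = int m * int n - int c" using assms by (simp add: of_nat_diff)
  have h2: "int (2 * n - k) = 2 * int n - int k" using assms by (simp add: of_nat_diff)
  have "2 * int (m * tri k + (m * n - c) * (2 * n - k))
      = int m * (2 * int (tri k)) + 2 * (int (m * n - c) * int (2 * n - k))"
  proof -
    define a where "a = m * n - c"
    define b where "b = 2 * n - k"
    show ?thesis unfolding a_def[symmetric] b_def[symmetric] by (simp add: algebra_simps)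
  qed
  also have "\<dots> = int m * (2 * int (tri k)) + 2 * (int m * int n - int c) * (2 * int n - int k)"
    by (simp add: h1 h2)
  also have "\<dots> = int m * (int k * (int k - 1)) + 2 * (int m * int n - int c) * (2 * int n - int k)"
    by (simp add: tri_int)
  also have "\<dots> = int m * (int n * (int n - 1)) + 2 * (int m * int n - int c) * int n
       + (int m * (int n - int k)^2 + (int m - 2 * int c) * (int n - int k))"
    by (simp add: algebra_simps power2_eq_square)
  also have "\<dots> = 2 * int ((m * tri n + (m * n - c) * n) + ee m c (int n - int k))"
  proof -
    have "2 * int ((m * tri n + (m * n - c) * n) + ee m c (int n - int k))
        = int m * (2 * int (tri n)) + 2 * (int (m * n - c) * int n) + 2 * int (ee m c (int n - int k))"
    proof -
      define a where "a = m * n - c"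
      show ?thesis unfolding a_def[symmetric] by (simp add: algebra_simps)
    qed
    also have "\<dots> = int m * (int n * (int n - 1)) + 2 * (int m * int n - int c) * int n
       + (int m * (int n - int k)^2 + (int m - 2 * int c) * (int n - int k))"
      by (simp only: h1 tri_int ee_twice[OF assms(1,2)])
    finally show ?thesis by simp
  qed
  finally have "int (m * tri k + (m * n - c) * (2 * n - k)) = int ((m * tri n + (m * n - c) * n) + ee m c (int n - int k))"
    by (simp only: mult_cancel_left) simp
  then show ?thesis by (simp only: of_nat_eq_iff)
qed



definition CC :: "nat \<Rightarrow> nat \<Rightarrow> nat \<Rightarrow> int fps" where
  "CC m c n = (\<Prod>k=1..n. (1 - XX^(m*k - c)) * (1 - XX^(m*k - (m - c))))"

lemma prod_double: "(\<Prod>i<n+n. f i) = (\<Prod>i<n. f i) * (\<Prod>i<n. f (i + n))" for f :: "nat \<Rightarrow> 'a::comm_monoid_mult"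
proof -
  have "(\<Prod>i<n+n. f i) = (\<Prod>i=0..<n. f i) * (\<Prod>i=n..<n+n. f i)"
    by (simp add: prod.atLeastLessThan_concat atLeast0LessThan[symmetric])
  also have "(\<Prod>i=n..<n+n. f i) = (\<Prod>i=0..<n. f (i + n))"
    using prod.shift_bounds_nat_ivl[of f 0 n n] by simp
  finally show ?thesis by (simp add: atLeast0LessThan)
qed

lemma finite_jtp:
  assumes "0 < c" "c < m"
  shows "CC m c n = (\<Sum>k\<le>2*n. (-1)^(n+k) * XX^(ee m c (int n - int k)) * qb (XX^m) (2*n) k)"
proof (cases "n = 0")
  case True
  then show ?thesis by (simp add: CC_def)
next
  case False
  then have "m \<le> m * n" by simp
  then have cmn: "c \<le> m * n" using assms by linarith
  define w where "w = - (XX^(m*n - c))"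
  define M where "M = m * tri n + (m * n - c) * n"
  have qt: "(\<Prod>i<2*n. w + 1 * (XX^m)^i) = (\<Sum>k\<le>2*n. (XX^m)^tri k * qb (XX^m) (2*n) k * 1^k * w^(2*n-k))"
    by (rule qbinom_thm)
  have L1: "(\<Prod>i<n. w + (XX^m)^i) = XX^(m * tri n) * (\<Prod>k=1..n. 1 - XX^(m*k - c))"
  proof -
    have "(\<Prod>i<n. w + (XX^m)^i) = (\<Prod>i<n. XX^(m*i) * (1 - XX^(m*(n-i) - c)))"
    proof (rule prod.cong)
      fix i assume "i \<in> {..<n}"
      then have i: "i < n" by simp
      then have "n - i \<ge> 1" by simp
      then have "m \<le> m*(n-i)" by simp
      moreover have "m*i + m*(n-i) = m*n" using i by (simp flip: add_mult_distrib2)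
      ultimately have "m * i + (m*(n-i) - c) = m * n - c"
        using assms by linarith
      then have "XX^(m*n - c) = XX^(m*i) * XX^(m*(n-i) - c)" by (metis power_add)
      moreover have "(XX^m)^i = XX^(m*i)" by (simp add: power_mult)
      ultimately have "w + (XX^m)^i = -(XX^(m*i) * XX^(m*(n-i) - c)) + XX^(m*i)"
        unfolding w_def by (simp only:)
      then show "w + (XX^m)^i = XX^(m*i) * (1 - XX^(m*(n-i) - c))"
        by (simp add: algebra_simps)
    qed simp
    also have "\<dots> = (\<Prod>i<n. XX^(m*i)) * (\<Prod>i<n. 1 - XX^(m*(n-i) - c))"
      by (rule prod.distrib)
    also have "(\<Prod>i<n. XX^(m*i)) = XX^(\<Sum>i<n. m*i)" by (simp add: power_sum)
    also have "(\<Sum>i<n. m*i) = m * tri n" by (simp add: sum_distrib_left[symmetric] sum_tri)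
    also have "(\<Prod>i<n. 1 - XX^(m*(n-i) - c)) = (\<Prod>i<n. 1 - XX^(m*Suc i - c))"
    proof -
      have "(\<Prod>i<n. 1 - XX^(m*(n-i) - c)) = (\<Prod>i<n. (\<lambda>i. 1 - XX^(m*Suc i - c)) (n - Suc i))"
        by (intro prod.cong) (auto simp: Suc_diff_Suc)
      also have "\<dots> = (\<Prod>i<n. 1 - XX^(m*Suc i - c))"
        by (rule prod.nat_diff_reindex)
      finally show ?thesis .
    qed
    also have "\<dots> = (\<Prod>k=1..n. 1 - XX^(m*k - c))"
      using prod.atLeast1_atMost_eq[of "\<lambda>k. 1 - XX^(m*k - c)" n] by simp
    finally show ?thesis .
  qed
  have L2: "(\<Prod>i<n. w + (XX^m)^(i+n)) = (-1)^n * XX^((m * n - c) * n) * (\<Prod>k=1..n. 1 - XX^(m*k - (m - c)))"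
  proof -
    have "(\<Prod>i<n. w + (XX^m)^(i+n)) = (\<Prod>i<n. (-(XX^(m*n - c))) * (1 - XX^(m*i + c)))"
    proof (rule prod.cong)
      fix i assume "i \<in> {..<n}"
      have "m * (i + n) = (m * n - c) + (m * i + c)" using cmn by (simp add: algebra_simps)
      then have "XX^(m*(i+n)) = XX^(m*n - c) * XX^(m*i + c)" by (metis power_add)
      moreover have "(XX^m)^(i+n) = XX^(m*(i+n))" by (simp add: power_mult)
      ultimately have "w + (XX^m)^(i+n) = -(XX^(m*n - c)) + XX^(m*n - c) * XX^(m*i + c)"
        unfolding w_def by (simp only:)
      then show "w + (XX^m)^(i+n) = (-(XX^(m*n - c))) * (1 - XX^(m*i + c))"
        by (simp add: algebra_simps)
    qed simp
    also have "\<dots> = (\<Prod>i<n. -(XX^(m*n - c))) * (\<Prod>i<n. 1 - XX^(m*i + c))"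
      by (rule prod.distrib)
    also have "(\<Prod>i<n. -(XX^(m*n - c))) = (-1)^n * XX^((m * n - c) * n)"
      by (simp only: prod_constant card_lessThan power_minus[of "XX^(m*n - c)"] power_mult[symmetric])
    also have "(\<Prod>i<n. 1 - XX^(m*i + c)) = (\<Prod>k=1..n. 1 - XX^(m*k - (m - c)))"
    proof -
      have "(\<Prod>k=1..n. 1 - XX^(m*k - (m - c))) = (\<Prod>i<n. 1 - XX^(m*Suc i - (m - c)))"
        using prod.atLeast1_atMost_eq[of "\<lambda>k. 1 - XX^(m*k - (m - c))" n] by simp
      also have "\<dots> = (\<Prod>i<n. 1 - XX^(m*i + c))"
        using assms by (intro prod.cong) auto
      finally show ?thesis by simp
    qed
    finally show ?thesis .
  qed
  have LHS: "(\<Prod>i<2*n. w + 1 * (XX^m)^i) = XX^M * ((-1)^n * CC m c n)"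
  proof -
    have "(\<Prod>i<2*n. w + 1 * (XX^m)^i) = (\<Prod>i<n+n. w + (XX^m)^i)" by (simp add: mult_2)
    also have "\<dots> = (\<Prod>i<n. w + (XX^m)^i) * (\<Prod>i<n. w + (XX^m)^(i+n))" by (rule prod_double)
    also have "\<dots> = XX^M * ((-1)^n * CC m c n)"
    proof -
      have "XX^M = XX^(m * tri n) * XX^((m * n - c) * n)" by (simp add: M_def power_add)
      then show ?thesis unfolding L1 L2 CC_def prod.distrib by (simp only: mult_ac)
    qed
    finally show ?thesis .
  qed
  have RHS: "(\<Sum>k\<le>2*n. (XX^m)^tri k * qb (XX^m) (2*n) k * 1^k * w^(2*n-k))
      = XX^M * (\<Sum>k\<le>2*n. (-1)^k * XX^(ee m c (int n - int k)) * qb (XX^m) (2*n) k)"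
    unfolding sum_distrib_left
  proof (rule sum.cong)
    fix k assume "k \<in> {..2*n}"
    then have k: "k \<le> 2*n" by simp
    have e: "m * tri k + (m * n - c) * (2 * n - k) = M + ee m c (int n - int k)"
      unfolding M_def by (rule exp_identity[OF assms k cmn])
    have s: "(-1::int fps)^(2*n-k) = (-1)^k"
      using k by (auto simp: minus_one_power_iff)
    have "(XX^m)^tri k * qb (XX^m) (2*n) k * 1^k * w^(2*n-k)
        = (-1)^(2*n-k) * XX^(m * tri k + (m * n - c) * (2 * n - k)) * qb (XX^m) (2*n) k"
      unfolding w_def
      by (simp only: power_minus[of "XX^(m*n-c)"] power_one mult_1_right power_mult[symmetric] power_add) (simp only: mult_ac)
    also have "\<dots> = XX^M * ((-1)^k * XX^(ee m c (int n - int k)) * qb (XX^m) (2*n) k)"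
      unfolding e s power_add by (simp add: ac_simps)
    finally show "(XX^m)^tri k * qb (XX^m) (2*n) k * 1^k * w^(2*n-k) = XX^M * ((-1)^k * XX^(ee m c (int n - int k)) * qb (XX^m) (2*n) k)" .
  qed simp
  have "XX^M * ((-1)^n * CC m c n) = XX^M * (\<Sum>k\<le>2*n. (-1)^k * XX^(ee m c (int n - int k)) * qb (XX^m) (2*n) k)"
    using qt LHS RHS by simp
  then have "(-1)^n * CC m c n = (\<Sum>k\<le>2*n. (-1)^k * XX^(ee m c (int n - int k)) * qb (XX^m) (2*n) k)"
    by simp
  then have "CC m c n = (-1)^n * (\<Sum>k\<le>2*n. (-1)^k * XX^(ee m c (int n - int k)) * qb (XX^m) (2*n) k)"
  proof -
    have "((-1)::int fps)^n * (-1)^n = 1" by (simp flip: power_mult_distrib)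
    then show ?thesis using \<open>(-1)^n * CC m c n = _\<close> by (metis mult.assoc mult_1)
  qed
  then show ?thesis by (simp add: sum_distrib_left power_add ac_simps)
qed



definition Th :: "nat \<Rightarrow> nat \<Rightarrow> nat \<Rightarrow> int fps" where
  "Th m c n = (\<Sum>k\<le>2*n. (-1)^(n+k) * XX^(ee m c (int n - int k)))"

lemma jtp_trunc:
  assumes "0 < c" "c < m" "2 * N + 1 \<le> n"
  shows "eqN N (AA (XX^m) n * CC m c n) (Th m c n)"
proof -
  have m1: "m \<ge> 1" using assms by simp
  define A where "A = AA (XX^m) N"
  have A0: "fps_nth A 0 = 1" unfolding A_def using AA_nth0[OF m1] .
  have AA_A: "eqN N (AA (XX^m) a) A" if "N \<le> a" for a
    unfolding A_def using AA_trunc[OF m1 that] .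
  have "AA (XX^m) (2*n) * CC m c n = (\<Sum>k\<le>2*n. XX^(ee m c (int n - int k)) * ((-1)^(n+k) * (AA (XX^m) (2*n) * qb (XX^m) (2*n) k)))"
    unfolding finite_jtp[OF assms(1,2)] sum_distrib_left by (intro sum.cong) (simp_all add: ac_simps)
  moreover have "eqN N (\<Sum>k\<le>2*n. XX^(ee m c (int n - int k)) * ((-1)^(n+k) * (AA (XX^m) (2*n) * qb (XX^m) (2*n) k)))
                      (\<Sum>k\<le>2*n. XX^(ee m c (int n - int k)) * ((-1)^(n+k) * 1))"
  proof (rule eqN_sum)
    fix k assume k: "k \<in> {..2*n}"
    show "eqN N (XX^(ee m c (int n - int k)) * ((-1)^(n+k) * (AA (XX^m) (2*n) * qb (XX^m) (2*n) k)))
                (XX^(ee m c (int n - int k)) * ((-1)^(n+k) * 1))"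
    proof (cases "N < ee m c (int n - int k)")
      case True
      then show ?thesis using eqN_Xpow_zero[OF True] by (meson eqN_sym eqN_trans)
    next
      case False
      then have "\<bar>int n - int k\<bar> \<le> int N" using ee_ge[OF assms(1,2), of "int n - int k"] by linarith
      then have k1: "N \<le> k" and k2: "N \<le> 2*n - k" using assms(3) k by auto
      have kk: "k \<le> 2*n" using k by simp
      have "eqN N (A * (qb (XX^m) (2*n) k * A)) (qb (XX^m) (2*n) k * AA (XX^m) k * AA (XX^m) (2*n - k))"
      proof -
        have "eqN N (qb (XX^m) (2*n) k * AA (XX^m) k * AA (XX^m) (2*n - k)) (qb (XX^m) (2*n) k * A * A)"
          by (intro eqN_mult AA_A k1 k2 eqN_refl)
        then show ?thesis by (simp add: eqN_sym ac_simps)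
      qed
      also have "qb (XX^m) (2*n) k * AA (XX^m) k * AA (XX^m) (2*n - k) = AA (XX^m) (2*n)"
        by (rule qb_prod[OF kk])
      finally have "eqN N (A * (qb (XX^m) (2*n) k * A)) (AA (XX^m) (2*n))" .
      then have "eqN N (A * (qb (XX^m) (2*n) k * A)) (A * 1)"
        using AA_A[of "2*n"] assms(3) by (auto intro: eqN_trans)
      then have q1: "eqN N (qb (XX^m) (2*n) k * A) 1" by (rule eqN_cancel[OF A0])
      have "eqN N (AA (XX^m) (2*n) * qb (XX^m) (2*n) k) (qb (XX^m) (2*n) k * A)"
        using AA_A[of "2*n"] assms(3) by (subst mult.commute) (intro eqN_mult, auto)
      then have "eqN N (AA (XX^m) (2*n) * qb (XX^m) (2*n) k) 1" using q1 by (rule eqN_trans)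
      then show ?thesis by (intro eqN_mult eqN_refl)
    qed
  qed
  ultimately have "eqN N (AA (XX^m) (2*n) * CC m c n) (Th m c n)"
    unfolding Th_def by (simp add: ac_simps)
  moreover have "eqN N (AA (XX^m) n * CC m c n) (AA (XX^m) (2*n) * CC m c n)"
  proof (intro eqN_mult eqN_refl)
    show "eqN N (AA (XX^m) n) (AA (XX^m) (2*n))"
    proof -
      have "N \<le> n" "N \<le> 2*n" using assms(3) by auto
      then show ?thesis using AA_A[of n] AA_A[of "2*n"] eqN_sym eqN_trans by blast
    qed
  qed
  ultimately show ?thesis by (rule eqN_trans[rotated])
qed

lemma CC_Suc: "CC m c (Suc n) = CC m c n * ((1 - XX^(m*Suc n - c)) * (1 - XX^(m * Suc n - (m - c))))"
  unfolding CC_def by (simp add: prod.nat_ivl_Suc')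

lemma euler_prod: "AA (XX^(3*m)) n * CC (3*m) m n = AA (XX^m) (3*n)"
proof (induction n)
  case 0
  then show ?case by (simp add: AA_def CC_def)
next
  case (Suc n)
  have e1: "3*m*Suc n - m = m * Suc (Suc (3*n))" by (simp add: algebra_simps)
  have e2: "3*m*Suc n - (3*m - m) = m * Suc (3*n)" by (simp add: algebra_simps)
  have "AA (XX^m) (3 * Suc n) = AA (XX^m) (3*n) * (1 - XX^(m * Suc (3*n))) * (1 - XX^(m * Suc (Suc (3*n)))) * (1 - XX^(m * Suc (Suc (Suc (3*n)))))"
  proof -
    have "AA (XX^m) (3 * Suc n) = AA (XX^m) (Suc (Suc (Suc (3*n))))"
      by (rule arg_cong[where f="AA (XX^m)"]) simp
    also have "\<dots> = AA (XX^m) (3*n) * (1 - (XX^m)^(Suc (3*n))) * (1 - (XX^m)^(Suc (Suc (3*n)))) * (1 - (XX^m)^(Suc (Suc (Suc (3*n)))))"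
      by (simp only: AA_Suc)
    finally show ?thesis by (simp only: power_mult[symmetric])
  qed
  moreover have "AA (XX^(3*m)) (Suc n) * CC (3*m) m (Suc n) = AA (XX^(3*m)) n * CC (3*m) m n * ((1 - XX^(3*m*Suc n)) * (1 - XX^(3*m*Suc n - m)) * (1 - XX^(3*m*Suc n - (3*m - m))))"
    by (simp only: AA_Suc CC_Suc power_mult[symmetric]) (simp only: mult_ac)
  moreover have "m * Suc (Suc (Suc (3*n))) = 3*m*Suc n" by simp
  ultimately show ?case unfolding e1 e2 Suc.IH by (simp add: ac_simps)
qed



definition parts :: "nat set \<Rightarrow> nat \<Rightarrow> nat multiset set" where
  "parts D n = {P. sum_mset P = n \<and> set_mset P \<subseteq> D}"

definition cnt :: "nat set \<Rightarrow> nat \<Rightarrow> nat" where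
  "cnt D n = card (parts D n)"

lemma elem_le_sum_mset: "x \<in># P \<Longrightarrow> x \<le> sum_mset (P :: nat multiset)"
  by (induction P) auto

lemma size_le_sum_mset: "0 \<notin># P \<Longrightarrow> size P \<le> sum_mset (P :: nat multiset)"
proof (induction P)
  case empty then show ?case by simp
next
  case (add x P)
  then have "x \<ge> 1" by (cases x) auto
  then show ?case using add by auto
qed

lemma finite_parts:
  assumes "0 \<notin> D" shows "finite (parts D n)"
proof -
  have "parts D n \<subseteq> (\<Union>s\<in>{..n}. multisets_of_size {..n} s)"
  proof
    fix P assume P: "P \<in> parts D n"
    then have "0 \<notin># P" using assms unfolding parts_def by auto
    then have "size P \<le> n" using P size_le_sum_mset unfolding parts_def by fastforce
    moreover have "set_mset P \<subseteq> {..n}" using P elem_le_sum_mset unfolding parts_def by fastforce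
    ultimately show "P \<in> (\<Union>s\<in>{..n}. multisets_of_size {..n} s)"
      unfolding multisets_of_size_def by auto
  qed
  moreover have "finite (\<Union>s\<in>{..n}. multisets_of_size {..n} s)" by auto
  ultimately show ?thesis by (rule finite_subset)
qed

lemma cnt_rec:
  assumes "0 \<notin> D" "s \<in> D"
  shows "cnt D n = cnt (D - {s}) n + (if s \<le> n then cnt D (n - s) else 0)"
proof -
  have s0: "s > 0" using assms by (cases s) auto
  have split: "parts D n = parts (D - {s}) n \<union> {P \<in> parts D n. s \<in># P}"
    unfolding parts_def by auto
  have disj: "parts (D - {s}) n \<inter> {P \<in> parts D n. s \<in># P} = {}"
    unfolding parts_def by auto
  have img: "{P \<in> parts D n. s \<in># P} = (if s \<le> n then (\<lambda>Q. Q + {#s#}) ` parts D (n - s) else {})"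
  proof (cases "s \<le> n")
    case True
    have "{P \<in> parts D n. s \<in># P} = (\<lambda>Q. Q + {#s#}) ` parts D (n - s)"
    proof (intro equalityI subsetI)
      fix P assume "P \<in> {P \<in> parts D n. s \<in># P}"
      then have P: "sum_mset P = n" "set_mset P \<subseteq> D" "s \<in># P" unfolding parts_def by auto
      have "P = (P - {#s#}) + {#s#}" using P(3) by simp
      moreover have "P - {#s#} \<in> parts D (n - s)"
      proof -
        have "sum_mset (P - {#s#}) + s = n" using P(1,3) by (metis sum_mset.remove add.commute)
        moreover have "set_mset (P - {#s#}) \<subseteq> D" using P(2) by (meson in_diffD subset_eq)
        ultimately show ?thesis unfolding parts_def by auto
      qed
      ultimately show "P \<in> (\<lambda>Q. Q + {#s#}) ` parts D (n - s)" by blast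
    next
      fix P assume "P \<in> (\<lambda>Q. Q + {#s#}) ` parts D (n - s)"
      then obtain Q where "Q \<in> parts D (n - s)" "P = Q + {#s#}" by auto
      then show "P \<in> {P \<in> parts D n. s \<in># P}" using True assms(2) unfolding parts_def by auto
    qed
    then show ?thesis using True by simp
  next
    case False
    have "{P \<in> parts D n. s \<in># P} = {}"
      using False elem_le_sum_mset unfolding parts_def by fastforce
    then show ?thesis using False by simp
  qed
  have fin1: "finite (parts (D - {s}) n)" using assms by (intro finite_parts) auto
  have fin2: "finite {P \<in> parts D n. s \<in># P}" using finite_parts[OF assms(1)] by auto
  have "cnt D n = card (parts (D - {s}) n) + card {P \<in> parts D n. s \<in># P}"
    unfolding cnt_def by (subst split, rule card_Un_disjoint[OF fin1 fin2 disj])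
  moreover have "card {P \<in> parts D n. s \<in># P} = (if s \<le> n then cnt D (n - s) else 0)"
    unfolding img cnt_def by (auto intro!: card_image inj_onI)
  ultimately show ?thesis unfolding cnt_def by simp
qed

definition FF :: "nat set \<Rightarrow> int fps" where
  "FF D = Abs_fps (\<lambda>n. int (cnt D n))"

lemma cnt_empty: "cnt {} n = (if n = 0 then 1 else 0)"
proof -
  have "parts {} n = (if n = 0 then {{#}} else {})" unfolding parts_def by auto
  then show ?thesis unfolding cnt_def by simp
qed

lemma FF_prod:
  assumes "finite D" "0 \<notin> D"
  shows "FF D * (\<Prod>s\<in>D. 1 - XX^s) = 1"
  using assms
proof (induction D rule: finite_induct)
  case empty
  have "FF {} = 1" unfolding FF_def by (rule fps_ext) (simp add: cnt_empty)
  then show ?case by simp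
next
  case (insert s D)
  have "FF (insert s D) * (1 - XX^s) = FF D"
  proof (rule fps_ext)
    fix n
    have r: "cnt (insert s D) n = cnt D n + (if s \<le> n then cnt (insert s D) (n - s) else 0)"
      using cnt_rec[of "insert s D" s n] insert by (simp add: insert_Diff_if)
    show "fps_nth (FF (insert s D) * (1 - XX^s)) n = fps_nth (FF D) n"
      using r by (simp add: FF_def algebra_simps fps_X_power_mult_nth fps_X_power_mult_right_nth not_less)
  qed
  then show ?case using insert by (simp add: mult.assoc[symmetric])
qed



definition EK :: "nat \<Rightarrow> nat \<Rightarrow> nat \<Rightarrow> nat set" where
  "EK m c K = (\<lambda>k. m*k - c) ` {1..K} \<union> (\<lambda>k. m*k - (m - c)) ` {1..K}"

lemma EK_fin: "finite (EK m c K)" unfolding EK_def by auto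

lemma EK_pos: assumes "0 < c" "c < m" shows "0 \<notin> EK m c K"
proof -
  have "m*k - c > 0" "m*k - (m - c) > 0" if "k \<ge> 1" for k
  proof -
    have "m*k \<ge> m" using that by simp
    then show "m*k - c > 0" "m*k - (m - c) > 0" using assms by linarith+
  qed
  then show ?thesis unfolding EK_def by fastforce
qed

lemma EK_prod:
  assumes "0 < c" "c < m" "2 * c \<noteq> m"
  shows "(\<Prod>s\<in>EK m c K. 1 - XX^s) = CC m c K"
proof -
  have mk: "m*k \<ge> m" if "k \<in> {1..K}" for k using that by simp
  have inj1: "inj_on (\<lambda>k. m*k - c) {1..K}"
  proof (rule inj_onI)
    fix k k' assume a: "k \<in> {1..K}" "k' \<in> {1..K}" "m*k - c = m*k' - c"
    have "m \<le> m*k" "m \<le> m*k'" using mk[OF a(1)] mk[OF a(2)] .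
    then have "m*k = m*k'" using a(3) assms by linarith
    then show "k = k'" using assms by simp
  qed
  have inj2: "inj_on (\<lambda>k. m*k - (m - c)) {1..K}"
  proof (rule inj_onI)
    fix k k' assume a: "k \<in> {1..K}" "k' \<in> {1..K}" "m*k - (m - c) = m*k' - (m - c)"
    have "m \<le> m*k" "m \<le> m*k'" using mk[OF a(1)] mk[OF a(2)] .
    then have "m*k = m*k'" using a(3) assms by linarith
    then show "k = k'" using assms by simp
  qed
  have disj: "(\<lambda>k. m*k - c) ` {1..K} \<inter> (\<lambda>k. m*k - (m - c)) ` {1..K} = {}"
  proof (rule ccontr)
    assume "\<not> ?thesis"
    then obtain k k' where kk: "k \<in> {1..K}" "k' \<in> {1..K}" "m*k - c = m*k' - (m - c)" by blast
    have a1: "c \<le> m*k" "m - c \<le> m*k'" using mk[OF kk(1)] mk[OF kk(2)] assms by linarith+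
    have d1: "int (m*k - c) = int m * int k - int c" using a1(1) by (simp add: of_nat_diff)
    have d2: "int (m*k' - (m - c)) = int m * int k' - (int m - int c)" using a1(2) assms by (simp add: of_nat_diff)
    have "int (m*k - c) = int (m*k' - (m - c))" using kk(3) by simp
    then have "int m * int k - int c = int m * int k' - int m + int c"
      unfolding d1 d2 by simp
    then have e: "int m * (int k - int k' + 1) = 2 * int c" by (simp add: algebra_simps)
    consider "int k - int k' + 1 \<le> 0" | "int k - int k' + 1 = 1" | "int k - int k' + 1 \<ge> 2" by linarith
    then show False
    proof cases
      case 1
      then have "int m * (int k - int k' + 1) \<le> 0" by (simp add: mult_nonneg_nonpos)
      then show False using e assms by simp
    next
      case 2
      then show False using e assms by simp
    next
      case 3
      then have "int m * (int k - int k' + 1) \<ge> int m * 2" by (intro mult_left_mono) auto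
      then show False using e assms by simp
    qed
  qed
  have "(\<Prod>s\<in>EK m c K. 1 - XX^s) = (\<Prod>s\<in>(\<lambda>k. m*k - c) ` {1..K}. 1 - XX^s) * (\<Prod>s\<in>(\<lambda>k. m*k - (m - c)) ` {1..K}. 1 - XX^s)"
    unfolding EK_def by (rule prod.union_disjoint[OF _ _ disj]) auto
  also have "\<dots> = (\<Prod>k=1..K. 1 - XX^(m*k - c)) * (\<Prod>k=1..K. 1 - XX^(m*k - (m - c)))"
    using prod.reindex[OF inj1, of "\<lambda>s. 1 - XX^s"] prod.reindex[OF inj2, of "\<lambda>s. 1 - XX^s"]
    by (simp add: o_def)
  also have "\<dots> = CC m c K" unfolding CC_def by (rule prod.distrib[symmetric])
  finally show ?thesis .
qed

lemma elem_cond: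
  assumes "0 < c" "c < m" "n + 1 \<le> K" "x \<le> n"
  shows "(0 < x \<and> (int x mod int m = int c mod int m \<or> int x mod int m = (- int c) mod int m)) \<longleftrightarrow> x \<in> EK m c K"
proof
  assume H: "0 < x \<and> (int x mod int m = int c mod int m \<or> int x mod int m = (- int c) mod int m)"
  have cm: "int c mod int m = int c" using assms by simp
  have ncm: "(- int c) mod int m = int m - int c" using assms by (simp add: zmod_zminus1_eq_if)
  have xm: "int x mod int m = int (x mod m)" by (simp add: of_nat_mod)
  define q where "q = x div m"
  have xq: "x = m * q + x mod m" unfolding q_def by simp
  have "x div m \<le> x" by (rule div_le_dividend)
  then have qK: "Suc q \<in> {1..K}" using assms unfolding q_def atLeastAtMost_iff by linarith
  from H consider "x mod m = c" | "x mod m = m - c"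
    using cm ncm xm assms by (auto simp: of_nat_diff)
  then show "x \<in> EK m c K"
  proof cases
    case 1
    then have "x = m * Suc q - (m - c)" using xq assms by (simp add: algebra_simps)
    then show ?thesis unfolding EK_def using qK by blast
  next
    case 2
    then have "x = m * Suc q - c" using xq assms by (simp add: algebra_simps)
    then show ?thesis unfolding EK_def using qK by blast
  qed
next
  assume "x \<in> EK m c K"
  then consider k where "k \<ge> 1" "x = m*k - c" | k where "k \<ge> 1" "x = m*k - (m - c)"
    unfolding EK_def by auto
  then show "0 < x \<and> (int x mod int m = int c mod int m \<or> int x mod int m = (- int c) mod int m)"
  proof cases
    case 1
    have "m*k \<ge> m" using 1 by simp
    then have "c \<le> m*k" using assms by linarith
    then have "int (m*k - c) = int m * int k - int c" by (simp add: of_nat_diff)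
    then have "int x = (- int c) + int k * int m" using 1 by (simp add: algebra_simps)
    moreover have "((- int c) + int k * int m) mod int m = (- int c) mod int m"
      by (rule mod_mult_self1)
    ultimately have "int x mod int m = (- int c) mod int m" by simp
    moreover have "x > 0" using 1 \<open>m*k \<ge> m\<close> assms by linarith
    ultimately show ?thesis by blast
  next
    case 2
    have "m*k \<ge> m" using 2 by simp
    then have "m - c \<le> m*k" using assms by linarith
    then have "int (m*k - (m - c)) = int m * int k - (int m - int c)" using assms by (simp add: of_nat_diff)
    then have "int x = int c + (int k - 1) * int m" using 2 by (simp add: algebra_simps)
    then have "int x mod int m = int c mod int m" by simp
    moreover have "x > 0" using 2 \<open>m*k \<ge> m\<close> assms by linarith
    ultimately show ?thesis by blast
  qed
qed

lemma pm_eq_parts: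
  assumes "0 < c" "c < m" "n + 1 \<le> K"
  shows "partitions_pm (int m) (int c) n = parts (EK m c K) n"
proof -
  have "P \<in> partitions_pm (int m) (int c) n \<longleftrightarrow> P \<in> parts (EK m c K) n" for P
  proof (cases "sum_mset P = n")
    case True
    then have le: "x \<in># P \<Longrightarrow> x \<le> n" for x using elem_le_sum_mset by blast
    show ?thesis unfolding partitions_pm_def parts_def using True elem_cond[OF assms le] by auto
  next
    case False
    then show ?thesis unfolding partitions_pm_def parts_def by auto
  qed
  then show ?thesis by blast
qed



lemma neg1_fps: "(-1::int fps) = fps_const (-1)"
  by (metis fps_const_1_eq_1 fps_const_neg)

lemma neg1_pow_fps: "((-1::int fps)^a) = fps_const ((-1)^a)"
  by (simp only: neg1_fps fps_const_power)

lemma pcm_cnt: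
  assumes "0 < c" "c < m" "i + 1 \<le> K"
  shows "pcm (int m) (int c) (int i) = int (cnt (EK m c K) i)"
  unfolding pcm_def cnt_def using pm_eq_parts[OF assms] by simp

lemma main_nat:
  assumes "0 < c" "c < m" "2 * c \<noteq> m" "K = 2 * N + 1"
  shows "(\<Sum>k\<le>2*K. (-1)^(K+k) * pcm (int m) (int c) (int N - int (ee m c (int K - int k))))
       = (\<Sum>k\<le>2*K. (-1)^(K+k) * (if ee (3*m) m (int K - int k) = N then 1 else 0))"
proof -
  have m1: "m \<ge> 1" using assms by simp
  define F where "F = FF (EK m c K)"
  have FC: "F * CC m c K = 1"
    unfolding F_def EK_prod[OF assms(1-3), symmetric] using FF_prod[OF EK_fin EK_pos[OF assms(1,2)]] .
  have h1: "eqN N (AA (XX^m) K * CC m c K) (Th m c K)"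
    using jtp_trunc[OF assms(1,2)] assms(4) by simp
  have h2: "eqN N (AA (XX^(3*m)) K * CC (3*m) m K) (Th (3*m) m K)"
    using jtp_trunc[of m "3*m" N K] assms by simp
  have h3: "eqN N (AA (XX^m) K) (Th (3*m) m K)"
  proof -
    have "eqN N (AA (XX^m) K) (AA (XX^m) N)" using AA_trunc[OF m1] assms(4) by simp
    moreover have "eqN N (AA (XX^m) (3*K)) (AA (XX^m) N)" using AA_trunc[OF m1] assms(4) by simp
    ultimately have "eqN N (AA (XX^m) K) (AA (XX^m) (3*K))" by (meson eqN_sym eqN_trans)
    then show ?thesis using h2 unfolding euler_prod by (meson eqN_sym eqN_trans)
  qed
  have "eqN N (F * Th m c K) (F * (AA (XX^m) K * CC m c K))"
    by (rule eqN_mult[OF eqN_refl eqN_sym[OF h1]])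
  moreover have "F * (AA (XX^m) K * CC m c K) = AA (XX^m) K"
    using FC by (simp add: ac_simps)
  ultimately have "eqN N (F * Th m c K) (AA (XX^m) K)" by simp
  then have "eqN N (F * Th m c K) (Th (3*m) m K)" using h3 by (rule eqN_trans)
  then have E: "fps_nth (F * Th m c K) N = fps_nth (Th (3*m) m K) N" unfolding eqN_def by simp
  have L: "fps_nth (F * Th m c K) N = (\<Sum>k\<le>2*K. (-1)^(K+k) * pcm (int m) (int c) (int N - int (ee m c (int K - int k))))"
  proof -
    have "F * Th m c K = (\<Sum>k\<le>2*K. fps_const ((-1)^(K+k)) * (F * XX^(ee m c (int K - int k))))"
      unfolding Th_def sum_distrib_left neg1_pow_fps by (simp add: ac_simps)
    then have "fps_nth (F * Th m c K) N = (\<Sum>k\<le>2*K. (-1)^(K+k) * fps_nth (F * XX^(ee m c (int K - int k))) N)"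
      by (simp add: fps_sum_nth)
    also have "\<dots> = (\<Sum>k\<le>2*K. (-1)^(K+k) * pcm (int m) (int c) (int N - int (ee m c (int K - int k))))"
    proof (rule sum.cong[OF refl])
      fix k
      define e where "e = ee m c (int K - int k)"
      have "fps_nth (F * XX^e) N = pcm (int m) (int c) (int N - int e)"
      proof (cases "N < e")
        case True
        then show ?thesis by (simp add: fps_X_power_mult_right_nth pcm_def)
      next
        case False
        then have "int N - int e = int (N - e)" by simp
        moreover have "N - e + 1 \<le> K" using assms(4) by simp
        ultimately have "pcm (int m) (int c) (int N - int e) = int (cnt (EK m c K) (N - e))"
          using pcm_cnt[OF assms(1,2)] by metis
        moreover have "fps_nth (F * XX^e) N = int (cnt (EK m c K) (N - e))"
          using False by (simp add: fps_X_power_mult_right_nth F_def FF_def)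
        ultimately show ?thesis by simp
      qed
      then show "(-1)^(K+k) * fps_nth (F * XX^(ee m c (int K - int k))) N
          = (-1)^(K+k) * pcm (int m) (int c) (int N - int (ee m c (int K - int k)))"
        unfolding e_def by simp
    qed
    finally show ?thesis .
  qed
  have R: "fps_nth (Th (3*m) m K) N = (\<Sum>k\<le>2*K. (-1)^(K+k) * (if ee (3*m) m (int K - int k) = N then 1 else 0))"
    unfolding Th_def neg1_pow_fps fps_sum_nth by (intro sum.cong refl) auto
  show ?thesis using E unfolding L R .
qed



lemma sum_reindex_sym:
  "(\<Sum>k\<le>2*K. f (int K - int k)) = (\<Sum>j\<in>{-int K..int K}. f j)"
  by (rule sum.reindex_bij_witness[where i="\<lambda>j. nat (int K - j)" and j="\<lambda>k. int K - int k"]) auto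

lemma sum_sym_split:
  "(\<Sum>j\<in>{-int K..int K}. f j) = f 0 + (\<Sum>j\<in>{1..int K}. f j + f (-j))"
proof (induction K)
  case 0
  then show ?case by simp
next
  case (Suc K)
  have s1: "{-int (Suc K)..int (Suc K)} = insert (int (Suc K)) (insert (- int (Suc K)) {-int K..int K})" by auto
  have s2: "{1..int (Suc K)} = insert (int (Suc K)) {1..int K}" by auto
  show ?case unfolding s1 s2 using Suc by (simp add: algebra_simps)
qed

lemma sign_eq: "(-1::int)^(K+k) = (-1)^nat \<bar>int K - int k\<bar>"
proof -
  have "even (K + k) \<longleftrightarrow> even (nat \<bar>int K - int k\<bar>)"
  proof (cases "k \<le> K")
    case True
    then have "nat \<bar>int K - int k\<bar> = K - k" by simp
    then show ?thesis using True by (simp add: even_diff_nat)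
  next
    case False
    then have "nat \<bar>int K - int k\<bar> = k - K" by simp
    then show ?thesis using False by (simp add: even_diff_nat add.commute)
  qed
  then show ?thesis by (simp add: minus_one_power_iff)
qed

lemma Q_iff:
  fixes M N :: nat and j :: int
  assumes "M \<ge> 1"
  shows "ee (3*M) M j = N \<longleftrightarrow> int N = int M * ((- j) * (3 * (- j) - 1) div 2)"
proof -
  have tw: "2 * int (ee (3*M) M j) = int M * (3 * j^2 + j)"
    using ee_twice[of M "3*M" j] assms by (simp add: algebra_simps)
  have ev: "even (3 * j^2 + j)"
  proof -
    have "3 * j^2 + j = j * (j + 1) + 2 * j^2" by (simp add: algebra_simps power2_eq_square)
    then show ?thesis by simp
  qed
  have "(- j) * (3 * (- j) - 1) = 3 * j^2 + j" by (simp add: algebra_simps power2_eq_square)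
  then have "int M * ((- j) * (3 * (- j) - 1) div 2) * 2 = int M * (3 * j^2 + j)"
    using ev by simp
  then show ?thesis using tw by (smt (verit) of_nat_eq_iff)
qed

lemma Q_unique:
  fixes m n j j' :: int
  assumes "m \<ge> 1" "n = m * (j * (3 * j - 1) div 2)" "n = m * (j' * (3 * j' - 1) div 2)"
  shows "j = j'"
proof -
  have ev: "even (x * (3 * x - 1))" for x :: int
  proof -
    have "x * (3 * x - 1) = 3 * (x * x) - x" by (simp add: algebra_simps)
    then show ?thesis by auto
  qed
  have "j * (3 * j - 1) div 2 = j' * (3 * j' - 1) div 2" using assms by simp
  then have "j * (3 * j - 1) = j' * (3 * j' - 1)" using ev[of j] ev[of j'] by (metis dvd_div_mult_self)
  then have "(j - j') * (3 * (j + j') - 1) = 0" by (simp add: algebra_simps)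
  moreover have "3 * (j + j') - 1 \<noteq> 0" by presburger
  ultimately show ?thesis by simp
qed



theorem theorem8:
  fixes m c n :: int
  assumes "m \<ge> 1" and "0 < c" and "c < m" and "2 * c \<noteq> m" and "n \<ge> 0"
  shows "pcm m c n + (\<Sum>j = 1..n. (-1) ^ nat j *
           (pcm m c (n - (m * j^2 + (m - 2 * c) * j) div 2)
          + pcm m c (n - (m * j^2 - (m - 2 * c) * j) div 2)))
       = (if \<exists>j::int. even j \<and> n = m * (j * (3 * j - 1) div 2) then 1
          else if \<exists>j::int. odd j \<and> n = m * (j * (3 * j - 1) div 2) then -1
          else 0)"
proof -
  obtain M C N :: nat where MCN: "m = int M" "c = int C" "n = int N"
    using assms by (metis nonneg_int_cases less_imp_le order.trans zero_le_one)
  have C0: "0 < C" and CM: "C < M" and C2: "2 * C \<noteq> M" and M1: "M \<ge> 1"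
    using assms MCN by auto
  define K where "K = 2 * N + 1"
  define Q where "Q j \<longleftrightarrow> n = m * (j * (3 * j - 1) div 2)" for j :: int
  define g where "g j = pcm m c (n - int (ee M C j))" for j :: int
  define phi where "phi j = (-1::int)^nat \<bar>j\<bar> * g j" for j :: int
  have main: "(\<Sum>k\<le>2*K. (-1)^(K+k) * pcm (int M) (int C) (int N - int (ee M C (int K - int k))))
       = (\<Sum>k\<le>2*K. (-1)^(K+k) * (if ee (3*M) M (int K - int k) = N then 1 else 0))"
    by (rule main_nat[OF C0 CM C2 K_def])
  have Epos: "(m * j^2 + (m - 2 * c) * j) div 2 = int (ee M C j)" for j
    using ee_twice[OF C0 CM, of j] MCN by simp
  have Eneg: "(m * j^2 - (m - 2 * c) * j) div 2 = int (ee M C (-j))" for j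
    using ee_twice[OF C0 CM, of "-j"] MCN by simp
  have LHS: "(\<Sum>k\<le>2*K. (-1)^(K+k) * pcm (int M) (int C) (int N - int (ee M C (int K - int k))))
      = pcm m c n + (\<Sum>j = 1..n. (-1) ^ nat j *
           (pcm m c (n - (m * j^2 + (m - 2 * c) * j) div 2)
          + pcm m c (n - (m * j^2 - (m - 2 * c) * j) div 2)))"
  proof -
    have "(\<Sum>k\<le>2*K. (-1)^(K+k) * pcm (int M) (int C) (int N - int (ee M C (int K - int k))))
        = (\<Sum>k\<le>2*K. phi (int K - int k))"
      unfolding phi_def g_def MCN by (simp add: sign_eq)
    also have "\<dots> = (\<Sum>j\<in>{-int K..int K}. phi j)" by (rule sum_reindex_sym)
    also have "\<dots> = phi 0 + (\<Sum>j\<in>{1..int K}. phi j + phi (-j))" by (rule sum_sym_split)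
    also have "(\<Sum>j\<in>{1..int K}. phi j + phi (-j)) = (\<Sum>j\<in>{1..n}. phi j + phi (-j))"
    proof (rule sum.mono_neutral_right)
      show "{1..n} \<subseteq> {1..int K}" using MCN K_def by auto
      show "\<forall>i\<in>{1..int K} - {1..n}. phi i + phi (- i) = 0"
      proof
        fix i assume "i \<in> {1..int K} - {1..n}"
        then have i: "i > n" by auto
        have "int (ee M C i) \<ge> \<bar>i\<bar>" "int (ee M C (-i)) \<ge> \<bar>-i\<bar>" using ee_ge[OF C0 CM] by blast+
        then have "n - int (ee M C i) < 0" "n - int (ee M C (-i)) < 0" using i by auto
        then show "phi i + phi (- i) = 0" unfolding phi_def g_def pcm_def by simp
      qed
    qed auto
    also have "(\<Sum>j\<in>{1..n}. phi j + phi (-j)) = (\<Sum>j = 1..n. (-1) ^ nat j *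
           (pcm m c (n - (m * j^2 + (m - 2 * c) * j) div 2)
          + pcm m c (n - (m * j^2 - (m - 2 * c) * j) div 2)))"
    proof (rule sum.cong[OF refl])
      fix j assume "j \<in> {1..n}"
      then have "\<bar>j\<bar> = j" "\<bar>-j\<bar> = j" by auto
      then show "phi j + phi (-j) = (-1) ^ nat j *
           (pcm m c (n - (m * j^2 + (m - 2 * c) * j) div 2)
          + pcm m c (n - (m * j^2 - (m - 2 * c) * j) div 2))"
        unfolding phi_def g_def Epos Eneg by (simp add: algebra_simps)
    qed
    also have "phi 0 = pcm m c n" unfolding phi_def g_def by simp
    finally show ?thesis .
  qed
  have QE: "ee (3*M) M j = N \<longleftrightarrow> Q (-j)" for j
    unfolding Q_def using Q_iff[OF M1, of j N] MCN by simp
  have RHS0: "(\<Sum>k\<le>2*K. (-1::int)^(K+k) * (if ee (3*M) M (int K - int k) = N then 1 else 0))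
      = (\<Sum>j\<in>{-int K..int K}. (-1)^nat \<bar>j\<bar> * (if Q (-j) then 1 else 0))"
  proof -
    have "(\<Sum>k\<le>2*K. (-1::int)^(K+k) * (if ee (3*M) M (int K - int k) = N then 1 else 0))
        = (\<Sum>k\<le>2*K. (\<lambda>j. (-1)^nat \<bar>j\<bar> * (if Q (-j) then 1 else 0)) (int K - int k))"
      by (simp only: sign_eq QE)
    also have "\<dots> = (\<Sum>j\<in>{-int K..int K}. (-1)^nat \<bar>j\<bar> * (if Q (-j) then 1 else 0))"
      by (rule sum_reindex_sym)
    finally show ?thesis .
  qed
  have RHS: "(\<Sum>j\<in>{-int K..int K}. (-1::int)^nat \<bar>j\<bar> * (if Q (-j) then 1 else 0))
      = (if \<exists>j::int. even j \<and> n = m * (j * (3 * j - 1) div 2) then 1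
          else if \<exists>j::int. odd j \<and> n = m * (j * (3 * j - 1) div 2) then -1
          else 0)"
  proof (cases "\<exists>j. Q j")
    case True
    then obtain j0 where j0: "Q j0" by blast
    have uq: "Q j \<longleftrightarrow> j = j0" for j
      using Q_unique[OF assms(1)] j0 unfolding Q_def by blast
    have "ee (3*M) M (-j0) = N" using QE j0 by simp
    then have "\<bar>-j0\<bar> \<le> int N" using ee_ge[of M "3*M" "-j0"] M1 by fastforce
    then have inS: "-j0 \<in> {-int K..int K}" unfolding K_def by auto
    have "(\<Sum>j\<in>{-int K..int K}. (-1::int)^nat \<bar>j\<bar> * (if Q (-j) then 1 else 0))
        = (\<Sum>j\<in>{-int K..int K}. if j = -j0 then (-1::int)^nat \<bar>j0\<bar> else 0)"
      by (rule sum.cong[OF refl]) (auto simp: uq)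
    also have "\<dots> = (-1::int)^nat \<bar>j0\<bar>" using inS by simp
    also have "\<dots> = (if even j0 then 1 else -1)"
      by (simp add: minus_one_power_iff even_nat_iff)
    also have "\<dots> = (if \<exists>j::int. even j \<and> n = m * (j * (3 * j - 1) div 2) then 1
          else if \<exists>j::int. odd j \<and> n = m * (j * (3 * j - 1) div 2) then -1
          else 0)"
      using uq j0 unfolding Q_def by auto
    finally show ?thesis .
  next
    case False
    then have "\<not> Q (-j)" for j by blast
    then have "(\<Sum>j\<in>{-int K..int K}. (-1::int)^nat \<bar>j\<bar> * (if Q (-j) then 1 else 0)) = 0" by simp
    moreover have "\<not> (\<exists>j::int. even j \<and> n = m * (j * (3 * j - 1) div 2))"
      "\<not> (\<exists>j::int. odd j \<and> n = m * (j * (3 * j - 1) div 2))" using False unfolding Q_def by auto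
    ultimately show ?thesis by simp
  qed
  show ?thesis using main LHS RHS0 RHS by simp
qed

end
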